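(* If $C\subseteq 2^{X}$ is an ample class, then the cube complex $Q(C)$ is collapsible.
   Context: A cube of $2^X$ is $\{T\cup Z:Z\subseteq Y\}$ with $Y\subseteq X$, $T\subseteq X\setminus Y$ ($Y$ its support, $|Y|$ its dimension). $Y$ is shattered by $C$ if $\{c\cap Y:c\in C\}=2^Y$; $C$ is ample if every set shattered by $C$ is the support of a cube contained in $C$. The cube complex $Q(C)$ is the set of all cubes of $2^X$ contained in $C$ (its faces, including single vertices). A free face of a cube complex is a face $Q$ strictly contained in exactly one other face $Q'$; an elementary collapse deletes $Q$ and $Q'$. The complex is collapsible if it can be reduced to a single vertex by a sequence of elementary collapses. *)

theory Defs
  imports Main
begin

definition cube :: "'a set \<Rightarrow> 'a set \<Rightarrow> 'a set set" where
  "cube T Y = {T \<union> Z | Z. Z \<subseteq> Y}"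

definition is_cube :: "'a set \<Rightarrow> 'a set set \<Rightarrow> bool" where
  "is_cube X Q \<longleftrightarrow> (\<exists>Y T. Y \<subseteq> X \<and> T \<subseteq> X - Y \<and> Q = cube T Y)"

definition shatters :: "'a set set \<Rightarrow> 'a set \<Rightarrow> bool" where
  "shatters C Y \<longleftrightarrow> (\<lambda>c. c \<inter> Y) ` C = Pow Y"

definition ample :: "'a set \<Rightarrow> 'a set set \<Rightarrow> bool" where
  "ample X C \<longleftrightarrow>
     (\<forall>Y. shatters C Y \<longrightarrow> (\<exists>T. Y \<subseteq> X \<and> T \<subseteq> X - Y \<and> cube T Y \<subseteq> C))"

definition cube_complex :: "'a set \<Rightarrow> 'a set set \<Rightarrow> 'a set set set" where
  "cube_complex X C = {Q. is_cube X Q \<and> Q \<subseteq> C}"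

definition free_face :: "'a set set set \<Rightarrow> 'a set set \<Rightarrow> 'a set set \<Rightarrow> bool" where
  "free_face K Q Q' \<longleftrightarrow> Q \<in> K \<and> Q' \<in> K \<and> Q \<subset> Q' \<and> (\<forall>R\<in>K. Q \<subset> R \<longrightarrow> R = Q')"

definition elementary_collapse :: "'a set set set \<Rightarrow> 'a set set set \<Rightarrow> bool" where
  "elementary_collapse K K' \<longleftrightarrow> (\<exists>Q Q'. free_face K Q Q' \<and> K' = K - {Q, Q'})"

definition collapsible :: "'a set set set \<Rightarrow> bool" where
  "collapsible K \<longleftrightarrow> (\<exists>v. elementary_collapse\<^sup>*\<^sup>* K {{v}})"

end

theory Submission
  imports Defs
begin


lemma collapse_sub: "elementary_collapse\<^sup>*\<^sup>* A B \<Longrightarrow> B \<subseteq> A"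
  by (induction rule: rtranclp_induct) (auto simp: elementary_collapse_def)

lemma lift_aux:
  "elementary_collapse\<^sup>*\<^sup>* A B \<Longrightarrow> A \<subseteq> A0 \<Longrightarrow> \<forall>F\<in>A0-B. \<forall>G\<in>M. \<not> F \<subset> G
   \<Longrightarrow> M \<inter> A0 = {} \<Longrightarrow> elementary_collapse\<^sup>*\<^sup>* (A \<union> M) (B \<union> M)"
proof (induction rule: converse_rtranclp_induct)
  case base
  then show ?case by simp
next
  case (step A A1)
  from step.hyps(1) obtain Q Q' where ff: "free_face A Q Q'" and A1: "A1 = A - {Q, Q'}"
    unfolding elementary_collapse_def by blast
  have "B \<subseteq> A1" using step.hyps(2) by (rule collapse_sub)
  then have QB: "Q \<notin> B" using A1 by auto
  have QA: "Q \<in> A" "Q' \<in> A" "Q \<subset> Q'" and uniq: "\<forall>R\<in>A. Q \<subset> R \<longrightarrow> R = Q'"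
    using ff unfolding free_face_def by auto
  have "free_face (A \<union> M) Q Q'"
    unfolding free_face_def using QA uniq QB step.prems by blast
  moreover have "A \<union> M - {Q, Q'} = A1 \<union> M" using A1 QA step.prems by blast
  ultimately have "elementary_collapse (A \<union> M) (A1 \<union> M)"
    unfolding elementary_collapse_def by blast
  moreover have "elementary_collapse\<^sup>*\<^sup>* (A1 \<union> M) (B \<union> M)"
    using step.IH step.prems A1 by blast
  ultimately show ?case by (rule converse_rtranclp_into_rtranclp)
qed

lemma lift:
  assumes "elementary_collapse\<^sup>*\<^sup>* A B" "\<forall>F\<in>A-B. \<forall>G\<in>M. \<not> F \<subset> G" "M \<inter> A = {}"
  shows "elementary_collapse\<^sup>*\<^sup>* (A \<union> M) (B \<union> M)"
  using lift_aux[OF assms(1) subset_refl assms(2) assms(3)] .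

lemma map_aux:
  "elementary_collapse\<^sup>*\<^sup>* A B \<Longrightarrow> A \<subseteq> A0 \<Longrightarrow> \<forall>F\<in>A0. \<forall>G\<in>A0. (\<phi> F \<subseteq> \<phi> G) = (F \<subseteq> G)
   \<Longrightarrow> elementary_collapse\<^sup>*\<^sup>* (\<phi> ` A) (\<phi> ` B)"
proof (induction rule: converse_rtranclp_induct)
  case base
  then show ?case by simp
next
  case (step A A1)
  from step.hyps(1) obtain Q Q' where ff: "free_face A Q Q'" and A1: "A1 = A - {Q, Q'}"
    unfolding elementary_collapse_def by blast
  have QA: "Q \<in> A" "Q' \<in> A" "Q \<subset> Q'" and uniq: "\<forall>R\<in>A. Q \<subset> R \<longrightarrow> R = Q'"
    using ff unfolding free_face_def by auto
  have mono: "\<And>F G. F \<in> A \<Longrightarrow> G \<in> A \<Longrightarrow> (\<phi> F \<subseteq> \<phi> G) = (F \<subseteq> G)"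
    using step.prems by blast
  have inj: "\<And>F G. F \<in> A \<Longrightarrow> G \<in> A \<Longrightarrow> \<phi> F = \<phi> G \<Longrightarrow> F = G"
    using mono by blast
  have "free_face (\<phi> ` A) (\<phi> Q) (\<phi> Q')"
    unfolding free_face_def
  proof (intro conjI ballI impI)
    show "\<phi> Q \<in> \<phi> ` A" "\<phi> Q' \<in> \<phi> ` A" using QA by auto
    show "\<phi> Q \<subset> \<phi> Q'" using QA mono[OF QA(1) QA(2)] mono[OF QA(2) QA(1)] by blast
    fix R assume "R \<in> \<phi> ` A" "\<phi> Q \<subset> R"
    then obtain R0 where R0: "R0 \<in> A" "R = \<phi> R0" by blast
    have "\<phi> Q \<subseteq> \<phi> R0" "\<not> \<phi> R0 \<subseteq> \<phi> Q" using \<open>\<phi> Q \<subset> R\<close> R0 by auto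
    then have "Q \<subseteq> R0" "\<not> R0 \<subseteq> Q" using mono[OF QA(1) R0(1)] mono[OF R0(1) QA(1)] by auto
    then have "Q \<subset> R0" by blast
    then have "R0 = Q'" using uniq R0(1) by blast
    then show "R = \<phi> Q'" using R0 by simp
  qed
  moreover have "\<phi> ` A - {\<phi> Q, \<phi> Q'} = \<phi> ` A1"
    using A1 QA inj by blast
  ultimately have "elementary_collapse (\<phi> ` A) (\<phi> ` A1)"
    unfolding elementary_collapse_def by blast
  moreover have "elementary_collapse\<^sup>*\<^sup>* (\<phi> ` A1) (\<phi> ` B)"
    using step.IH step.prems A1 by blast
  ultimately show ?case by (rule converse_rtranclp_into_rtranclp)
qed

lemma matching_collapse:
  assumes fin: "finite L" and inj: "inj_on g L" and sub: "\<forall>F\<in>L. F \<subset> g F"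
    and d1: "L \<inter> g ` L = {}" and d2: "K0 \<inter> L = {}" and d3: "K0 \<inter> g ` L = {}"
    and star: "\<forall>F\<in>L. \<forall>G\<in>K0 \<union> L \<union> g ` L. F \<subset> G \<longrightarrow>
       G = g F \<or> (G \<in> L \<and> card F < card G) \<or> (\<exists>F'\<in>L. G = g F' \<and> card F < card F')"
  shows "elementary_collapse\<^sup>*\<^sup>* (K0 \<union> L \<union> g ` L) K0"
proof -
  have "\<forall>S. S \<subseteq> L \<longrightarrow> card S = n \<longrightarrow> elementary_collapse\<^sup>*\<^sup>* (K0 \<union> S \<union> g ` S) K0" for n
  proof (induction n)
    case 0
    show ?case
    proof (intro allI impI)
      fix S assume "S \<subseteq> L" "card S = 0"
      then have "S = {}" using fin finite_subset card_0_eq by metis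
      then show "elementary_collapse\<^sup>*\<^sup>* (K0 \<union> S \<union> g ` S) K0" by simp
    qed
  next
    case (Suc n)
    show ?case
    proof (intro allI impI)
      fix S assume SL: "S \<subseteq> L" and cS: "card S = Suc n"
      have finS: "finite S" using SL fin finite_subset by blast
      have Sne: "S \<noteq> {}" using cS by auto
      define m where "m = Max (card ` S)"
      have "m \<in> card ` S" unfolding m_def using finS Sne by simp
      then obtain F where FS: "F \<in> S" and cF: "card F = m" by blast
      have maxF: "\<And>F'. F' \<in> S \<Longrightarrow> card F' \<le> card F"
        using cF finS unfolding m_def by simp
      have FL: "F \<in> L" using FS SL by blast
      let ?K = "K0 \<union> S \<union> g ` S"
      let ?K' = "K0 \<union> (S - {F}) \<union> g ` (S - {F})"
      have ff: "free_face ?K F (g F)"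
        unfolding free_face_def
      proof (intro conjI ballI impI)
        show "F \<in> ?K" "g F \<in> ?K" using FS by auto
        show "F \<subset> g F" using sub FL by blast
        fix R assume RK: "R \<in> ?K" and FR: "F \<subset> R"
        have RK2: "R \<in> K0 \<union> L \<union> g ` L" using RK SL by blast
        from star FL RK2 FR
        have "R = g F \<or> (R \<in> L \<and> card F < card R) \<or> (\<exists>F'\<in>L. R = g F' \<and> card F < card F')"
          by blast
        then show "R = g F"
        proof (elim disjE)
          assume "R \<in> L \<and> card F < card R"
          then have "R \<in> S" using RK d1 d2 SL by blast
          then show ?thesis using maxF \<open>R \<in> L \<and> card F < card R\<close> by fastforce
        next
          assume "\<exists>F'\<in>L. R = g F' \<and> card F < card F'"
          then obtain F' where F'L: "F' \<in> L" and R: "R = g F'" and c: "card F < card F'" by blast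
          have "R \<notin> K0" using d3 F'L R by blast
          moreover have "R \<notin> S" using d1 F'L R SL by blast
          ultimately obtain F'' where "F'' \<in> S" "R = g F''" using RK by blast
          then have "F'' = F'" using inj F'L SL R unfolding inj_on_def by blast
          then show ?thesis using maxF c \<open>F'' \<in> S\<close> by fastforce
        qed simp
      qed
      have eqK: "?K - {F, g F} = ?K'"
      proof -
        have "F \<notin> K0" using d2 FL by blast
        moreover have "g F \<notin> K0" using d3 FL by blast
        moreover have "F \<notin> g ` L" using d1 FL by blast
        moreover have "g F \<notin> L" using d1 FL by blast
        moreover have "\<And>F'. F' \<in> S \<Longrightarrow> g F' = g F \<Longrightarrow> F' = F"
          using inj SL FL unfolding inj_on_def by blast
        ultimately show ?thesis
        proof (intro set_eqI iffI)
          fix R assume a1: "F \<notin> K0" "g F \<notin> K0" "F \<notin> g ` L" "g F \<notin> L"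
            and a2: "\<And>F'. F' \<in> S \<Longrightarrow> g F' = g F \<Longrightarrow> F' = F"
            and R: "R \<in> ?K - {F, g F}"
          show "R \<in> ?K'"
          proof (cases "R \<in> g ` S")
            case True
            then obtain F' where "F' \<in> S" "R = g F'" by blast
            then show ?thesis using R by auto
          next
            case False then show ?thesis using R by auto
          qed
        next
          fix R assume a1: "F \<notin> K0" "g F \<notin> K0" "F \<notin> g ` L" "g F \<notin> L"
            and a2: "\<And>F'. F' \<in> S \<Longrightarrow> g F' = g F \<Longrightarrow> F' = F"
            and R: "R \<in> ?K'"
          have "R \<noteq> F"
          proof
            assume "R = F"
            then show False using R a1(1,3) SL by auto
          qed
          moreover have "R \<noteq> g F"
          proof
            assume RF: "R = g F"
            then have "R \<notin> K0" "R \<notin> S" using a1(2,4) SL by auto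
            then obtain F' where "F' \<in> S - {F}" "R = g F'" using R by blast
            then show False using a2 RF by blast
          qed
          moreover have "R \<in> ?K" using R by blast
          ultimately show "R \<in> ?K - {F, g F}" by blast
        qed
      qed
      have "elementary_collapse ?K ?K'"
        unfolding elementary_collapse_def
        by (rule exI[of _ F], rule exI[of _ "g F"]) (simp add: ff eqK)
      moreover have "elementary_collapse\<^sup>*\<^sup>* ?K' K0"
      proof -
        have "S - {F} \<subseteq> L" using SL by blast
        moreover have "card (S - {F}) = n" using cS finS FS by simp
        ultimately show ?thesis using Suc.IH by blast
      qed
      ultimately show "elementary_collapse\<^sup>*\<^sup>* ?K K0" by (rule converse_rtranclp_into_rtranclp)
    qed
  qed
  then show ?thesis by blast
qed




definition iv :: "'a set \<Rightarrow> 'a set \<Rightarrow> 'a set set" where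
  "iv T U = {c. T \<subseteq> c \<and> c \<subseteq> U}"

lemma cube_iv: "cube T Y = iv T (T \<union> Y)"
proof
  show "cube T Y \<subseteq> iv T (T \<union> Y)" unfolding cube_def iv_def by auto
  show "iv T (T \<union> Y) \<subseteq> cube T Y"
  proof
    fix c assume "c \<in> iv T (T \<union> Y)"
    then have "c = T \<union> (c - T)" "c - T \<subseteq> Y" unfolding iv_def by auto
    then show "c \<in> cube T Y" unfolding cube_def by blast
  qed
qed

lemma is_cube_iff: "is_cube X Q \<longleftrightarrow> (\<exists>T U. T \<subseteq> U \<and> U \<subseteq> X \<and> Q = iv T U)"
proof
  assume "is_cube X Q"
  then obtain Y T where "Y \<subseteq> X" "T \<subseteq> X - Y" "Q = cube T Y" unfolding is_cube_def by blast
  then show "\<exists>T U. T \<subseteq> U \<and> U \<subseteq> X \<and> Q = iv T U" unfolding cube_iv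
    by (intro exI[of _ T] exI[of _ "T \<union> Y"]) auto
next
  assume "\<exists>T U. T \<subseteq> U \<and> U \<subseteq> X \<and> Q = iv T U"
  then obtain T U where "T \<subseteq> U" "U \<subseteq> X" "Q = iv T U" by blast
  moreover have "T \<union> (U - T) = U" using \<open>T \<subseteq> U\<close> by blast
  ultimately show "is_cube X Q" unfolding is_cube_def cube_iv
    by (intro exI[of _ "U - T"] exI[of _ T]) auto
qed

lemma cc_iff: "Q \<in> cube_complex X C \<longleftrightarrow> (\<exists>T U. T \<subseteq> U \<and> U \<subseteq> X \<and> Q = iv T U) \<and> Q \<subseteq> C"
  unfolding cube_complex_def is_cube_iff by blast

lemma cc_mono: "D \<subseteq> D' \<Longrightarrow> cube_complex X D \<subseteq> cube_complex X D'"
  unfolding cube_complex_def by blast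

lemma cc_restrict: "Q \<in> cube_complex X C \<Longrightarrow> Q \<subseteq> D \<Longrightarrow> Q \<in> cube_complex X D"
  unfolding cube_complex_def by blast

lemma face_ne: "Q \<in> cube_complex X C \<Longrightarrow> Q \<noteq> {}"
  unfolding cc_iff iv_def by blast

lemma face_sub: "Q \<in> cube_complex X C \<Longrightarrow> Q \<subseteq> C"
  unfolding cube_complex_def by blast

lemma face_pow: "Q \<in> cube_complex X C \<Longrightarrow> Q \<subseteq> Pow X"
  unfolding cc_iff iv_def by blast

lemma face_finite: "finite X \<Longrightarrow> Q \<in> cube_complex X C \<Longrightarrow> finite Q"
proof -
  assume "finite X" "Q \<in> cube_complex X C"
  then have "Q \<subseteq> Pow X" "finite (Pow X)" using face_pow[of Q X C] by auto
  then show "finite Q" by (rule finite_subset)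
qed

lemma cc_finite: "finite X \<Longrightarrow> finite (cube_complex X C)"
proof -
  assume "finite X"
  moreover have "cube_complex X C \<subseteq> Pow (Pow X)" using face_pow by blast
  ultimately show ?thesis by (meson finite_Pow_iff finite_subset)
qed

definition flip :: "'a \<Rightarrow> 'a set \<Rightarrow> 'a set" where
  "flip x c = (if x \<in> c then c - {x} else insert x c)"

definition side :: "'a \<Rightarrow> bool \<Rightarrow> 'a set set" where
  "side x b = {c. (x \<in> c) = b}"

definition half :: "'a \<Rightarrow> bool \<Rightarrow> 'a set set \<Rightarrow> 'a set set" where
  "half x b C = {c \<in> C. (x \<in> c) = b}"

definition carr :: "'a \<Rightarrow> bool \<Rightarrow> 'a set set \<Rightarrow> 'a set set" where
  "carr x b C = {c \<in> C. (x \<in> c) = b \<and> flip x c \<in> C}"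

definition cr :: "'a \<Rightarrow> 'a set set \<Rightarrow> 'a set set" where
  "cr x F = F \<union> flip x ` F"

lemma flip_flip[simp]: "flip x (flip x c) = c"
  unfolding flip_def by auto

lemma flip_mem[simp]: "(x \<in> flip x c) = (x \<notin> c)"
  unfolding flip_def by auto

lemma half_side: "half x b C \<subseteq> side x b" unfolding half_def side_def by auto
lemma carr_side: "carr x b C \<subseteq> side x b" unfolding carr_def side_def by auto
lemma carr_half: "carr x b C \<subseteq> half x b C" unfolding carr_def half_def by auto
lemma half_sub: "half x b C \<subseteq> C" unfolding half_def by auto
lemma carr_sub: "carr x b C \<subseteq> C" unfolding carr_def by auto

lemma flip_img_side: "F \<subseteq> side x b \<Longrightarrow> flip x ` F \<subseteq> side x (\<not> b)"
proof
  fix c assume F: "F \<subseteq> side x b" and "c \<in> flip x ` F"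
  then obtain d where d: "d \<in> F" "c = flip x d" by blast
  then have "(x \<in> d) = b" using F unfolding side_def by blast
  then show "c \<in> side x (\<not> b)" using d(2) unfolding side_def by simp
qed

lemma side_disj0: "side x b \<inter> side x (\<not> b) = {}"
  unfolding side_def by auto

lemma cr_side: "F \<subseteq> side x b \<Longrightarrow> cr x F \<inter> side x b = F"
proof -
  assume F: "F \<subseteq> side x b"
  have "flip x ` F \<inter> side x b = {}" using flip_img_side[OF F] side_disj0[of x b] by blast
  then show ?thesis unfolding cr_def using F by blast
qed

lemma cr_sup: "F \<subseteq> cr x F" unfolding cr_def by auto

lemma cr_not_side: "F \<noteq> {} \<Longrightarrow> F \<subseteq> side x b \<Longrightarrow> \<not> cr x F \<subseteq> side x b'"
proof
  assume F: "F \<noteq> {}" "F \<subseteq> side x b" and sub: "cr x F \<subseteq> side x b'"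
  obtain d where d: "d \<in> F" using F by blast
  have "d \<in> cr x F" "flip x d \<in> cr x F" using d unfolding cr_def by auto
  then have h: "(x \<in> d) = b'" "(x \<in> flip x d) = b'" using sub unfolding side_def by blast+
  have "(x \<in> flip x d) = (x \<notin> d)" by (rule flip_mem)
  then show False using h by blast
qed

lemma cr_psup: "F \<noteq> {} \<Longrightarrow> F \<subseteq> side x b \<Longrightarrow> F \<subset> cr x F"
proof -
  assume F: "F \<noteq> {}" "F \<subseteq> side x b"
  have "\<not> cr x F \<subseteq> side x b" by (rule cr_not_side[OF F])
  then have "cr x F \<noteq> F" using F(2) by auto
  then show "F \<subset> cr x F" using cr_sup[of F x] by blast
qed

lemma cr_mono_iff: "F \<subseteq> side x b \<Longrightarrow> G \<subseteq> side x b \<Longrightarrow> (cr x F \<subseteq> cr x G) = (F \<subseteq> G)"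
proof
  assume "F \<subseteq> side x b" "G \<subseteq> side x b" "cr x F \<subseteq> cr x G"
  then have "cr x F \<inter> side x b \<subseteq> cr x G \<inter> side x b" by blast
  then show "F \<subseteq> G" using cr_side[of F x b] cr_side[of G x b] \<open>F \<subseteq> side x b\<close> \<open>G \<subseteq> side x b\<close> by simp
qed (auto simp: cr_def)

lemma cr_sub_carr: "F \<subseteq> carr x b C \<Longrightarrow> cr x F \<subseteq> C"
  unfolding cr_def carr_def by auto

lemma cr_iv:
  assumes "T \<subseteq> U" "(x \<in> T) = (x \<in> U)"
  shows "cr x (iv T U) = iv (T - {x}) (insert x U)"
proof
  show "cr x (iv T U) \<subseteq> iv (T - {x}) (insert x U)"
    unfolding cr_def iv_def flip_def by auto
  show "iv (T - {x}) (insert x U) \<subseteq> cr x (iv T U)"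
  proof
    fix c assume c: "c \<in> iv (T - {x}) (insert x U)"
    show "c \<in> cr x (iv T U)"
    proof (cases "x \<in> T")
      case True
      show ?thesis
      proof (cases "x \<in> c")
        case True
        then have "c \<in> iv T U" using c \<open>x \<in> T\<close> assms unfolding iv_def by auto
        then show ?thesis unfolding cr_def by auto
      next
        case False
        then have "insert x c \<in> iv T U" using c \<open>x \<in> T\<close> assms unfolding iv_def by auto
        moreover have "c = flip x (insert x c)" using False unfolding flip_def by auto
        ultimately show ?thesis unfolding cr_def by blast
      qed
    next
      case False
      then have xU: "x \<notin> U" using assms by auto
      show ?thesis
      proof (cases "x \<in> c")
        case True
        then have "c - {x} \<in> iv T U" using c False xU unfolding iv_def by auto
        moreover have "c = flip x (c - {x})" using True unfolding flip_def by auto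
        ultimately show ?thesis unfolding cr_def by blast
      next
        case False
        then have "c \<in> iv T U" using c \<open>x \<notin> T\<close> xU unfolding iv_def by auto
        then show ?thesis unfolding cr_def by auto
      qed
    qed
  qed
qed

lemma cr_face:
  assumes xX: "x \<in> X" and F: "F \<in> cube_complex X (carr x b C)"
  shows "cr x F \<in> cube_complex X C"
proof -
  obtain T U where TU: "T \<subseteq> U" "U \<subseteq> X" "F = iv T U" and FC: "F \<subseteq> carr x b C"
    using F unfolding cc_iff by blast
  have "T \<in> F" "U \<in> F" using TU unfolding iv_def by auto
  then have "(x \<in> T) = b" "(x \<in> U) = b" using FC unfolding carr_def by auto
  then have e: "cr x F = iv (T - {x}) (insert x U)" using cr_iv[of T U x] TU by simp
  have s: "T - {x} \<subseteq> insert x U" "insert x U \<subseteq> X" using TU xX by auto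
  have "cr x F \<subseteq> C" by (rule cr_sub_carr[OF FC])
  moreover have "\<exists>T' U'. T' \<subseteq> U' \<and> U' \<subseteq> X \<and> cr x F = iv T' U'"
    using e s by blast
  ultimately show ?thesis unfolding cc_iff by blast
qed

lemma decomp:
  assumes xX: "x \<in> X"
  shows "cube_complex X C = cube_complex X (half x False C) \<union> cube_complex X (half x True C)
           \<union> cr x ` cube_complex X (carr x b C)"
proof
  show "cube_complex X (half x False C) \<union> cube_complex X (half x True C)
           \<union> cr x ` cube_complex X (carr x b C) \<subseteq> cube_complex X C"
  proof -
    have "cube_complex X (half x False C) \<subseteq> cube_complex X C" by (rule cc_mono[OF half_sub])
    moreover have "cube_complex X (half x True C) \<subseteq> cube_complex X C" by (rule cc_mono[OF half_sub])
    moreover have "cr x ` cube_complex X (carr x b C) \<subseteq> cube_complex X C" using cr_face[OF xX] by blast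
    ultimately show ?thesis by blast
  qed
  show "cube_complex X C \<subseteq> cube_complex X (half x False C) \<union> cube_complex X (half x True C)
           \<union> cr x ` cube_complex X (carr x b C)"
  proof
    fix Q assume Q: "Q \<in> cube_complex X C"
    obtain T U where TU: "T \<subseteq> U" "U \<subseteq> X" "Q = iv T U" and QC: "Q \<subseteq> C"
      using Q unfolding cc_iff by blast
    show "Q \<in> cube_complex X (half x False C) \<union> cube_complex X (half x True C)
           \<union> cr x ` cube_complex X (carr x b C)"
    proof (cases "x \<in> T")
      case True
      then have "Q \<subseteq> half x True C" using QC TU unfolding half_def iv_def by auto
      then show ?thesis using Q cc_restrict by blast
    next
      case xT: False
      show ?thesis
      proof (cases "x \<in> U")
        case False
        then have "Q \<subseteq> half x False C" using QC TU unfolding half_def iv_def by auto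
        then show ?thesis using Q cc_restrict by blast
      next
        case xU: True
        define T' where "T' = (if b then insert x T else T)"
        define U' where "U' = (if b then U else U - {x})"
        have TU': "T' \<subseteq> U'" "U' \<subseteq> X" "(x \<in> T') = b" "(x \<in> U') = b"
          using TU xT xU unfolding T'_def U'_def by auto
        have sub: "iv T' U' \<subseteq> Q" using TU xT xU unfolding T'_def U'_def iv_def by auto
        have flipQ: "\<And>c. c \<in> Q \<Longrightarrow> flip x c \<in> Q"
          using TU xT xU unfolding iv_def flip_def by auto
        have "iv T' U' \<subseteq> carr x b C"
        proof
          fix c assume c: "c \<in> iv T' U'"
          then have "c \<in> Q" using sub by blast
          moreover have "(x \<in> c) = b" using c TU' unfolding iv_def by auto
          ultimately show "c \<in> carr x b C" using QC flipQ unfolding carr_def by auto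
        qed
        then have F: "iv T' U' \<in> cube_complex X (carr x b C)" using TU' unfolding cc_iff by blast
        have "cr x (iv T' U') = iv (T' - {x}) (insert x U')" using cr_iv[of T' U' x] TU' by simp
        also have "\<dots> = Q"
        proof -
          have "T' - {x} = T" "insert x U' = U" using xT xU unfolding T'_def U'_def by auto
          then show ?thesis using TU by simp
        qed
        finally show ?thesis using F by blast
      qed
    qed
  qed
qed




lemma mem_cube: "c \<in> cube T Y \<longleftrightarrow> T \<subseteq> c \<and> c \<subseteq> T \<union> Y"
  unfolding cube_iv iv_def by auto

lemma shatters_iff: "shatters C Y \<longleftrightarrow> (\<forall>P. P \<subseteq> Y \<longrightarrow> (\<exists>c\<in>C. c \<inter> Y = P))"
proof
  assume "shatters C Y"
  then have eq: "(\<lambda>c. c \<inter> Y) ` C = Pow Y" unfolding shatters_def .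
  show "\<forall>P. P \<subseteq> Y \<longrightarrow> (\<exists>c\<in>C. c \<inter> Y = P)"
  proof (intro allI impI)
    fix P assume "P \<subseteq> Y"
    then have "P \<in> (\<lambda>c. c \<inter> Y) ` C" using eq by blast
    then show "\<exists>c\<in>C. c \<inter> Y = P" by blast
  qed
next
  assume h: "\<forall>P. P \<subseteq> Y \<longrightarrow> (\<exists>c\<in>C. c \<inter> Y = P)"
  have "(\<lambda>c. c \<inter> Y) ` C \<subseteq> Pow Y" by blast
  moreover have "Pow Y \<subseteq> (\<lambda>c. c \<inter> Y) ` C"
  proof
    fix P assume "P \<in> Pow Y"
    then obtain c where "c \<in> C" "c \<inter> Y = P" using h by blast
    then show "P \<in> (\<lambda>c. c \<inter> Y) ` C" by blast
  qed
  ultimately show "shatters C Y" unfolding shatters_def by blast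
qed

lemma ampleD:
  assumes "ample X C" "\<And>P. P \<subseteq> Y \<Longrightarrow> \<exists>c\<in>C. c \<inter> Y = P"
  shows "\<exists>T. Y \<subseteq> X \<and> T \<subseteq> X - Y \<and> cube T Y \<subseteq> C"
  using assms unfolding ample_def shatters_iff by blast

lemma int_insert:
  assumes "(x \<in> c) = (x \<in> P)" "c \<inter> Y = P - {x}" "P \<subseteq> insert x Y"
  shows "c \<inter> insert x Y = P"
proof (rule set_eqI)
  fix y show "y \<in> c \<inter> insert x Y \<longleftrightarrow> y \<in> P"
  proof (cases "y = x")
    case True then show ?thesis using assms(1) by simp
  next
    case False
    then have "y \<in> c \<inter> insert x Y \<longleftrightarrow> y \<in> c \<inter> Y" by blast
    also have "\<dots> \<longleftrightarrow> y \<in> P - {x}" using assms(2) by simp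
    also have "\<dots> \<longleftrightarrow> y \<in> P" using False by simp
    finally show ?thesis .
  qed
qed

lemma flip_int: "x \<notin> Y \<Longrightarrow> flip x c \<inter> Y = c \<inter> Y"
  unfolding flip_def by auto

lemma ample_half:
  assumes am: "ample X C"
  shows "ample X (half x b C)"
  unfolding ample_def
proof (intro allI impI)
  fix Y assume sh: "shatters (half x b C) Y"
  then have shP: "\<And>P. P \<subseteq> Y \<Longrightarrow> \<exists>c\<in>half x b C. c \<inter> Y = P" unfolding shatters_iff by blast
  have xY: "x \<notin> Y"
  proof
    assume "x \<in> Y"
    have "(if b then {} else Y) \<subseteq> Y" by simp
    then obtain c where "c \<in> half x b C" "c \<inter> Y = (if b then {} else Y)" using shP by blast
    then show False using \<open>x \<in> Y\<close> unfolding half_def by (cases b) auto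
  qed
  have "\<exists>c\<in>C. c \<inter> Y = P" if PY: "P \<subseteq> Y" for P
  proof -
    obtain c where "c \<in> half x b C" "c \<inter> Y = P" using shP[OF PY] by blast
    then show ?thesis using half_sub[of x b C] by blast
  qed
  note shX = this
  obtain T where T: "Y \<subseteq> X" "T \<subseteq> X - Y" "cube T Y \<subseteq> C" using ampleD[OF am, OF shX] by blast
  show "\<exists>T. Y \<subseteq> X \<and> T \<subseteq> X - Y \<and> cube T Y \<subseteq> half x b C"
  proof (cases "(x \<in> T) = b")
    case True
    have "cube T Y \<subseteq> half x b C"
    proof
      fix c assume c: "c \<in> cube T Y"
      then have "T \<subseteq> c" "c \<subseteq> T \<union> Y" by (simp_all add: mem_cube)
      then have "(x \<in> c) = b" using True xY by auto
      then show "c \<in> half x b C" using T(3) c unfolding half_def by blast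
    qed
    then show ?thesis using T by blast
  next
    case False
    have "\<exists>c\<in>C. c \<inter> insert x Y = P" if P: "P \<subseteq> insert x Y" for P
    proof (cases "(x \<in> P) = b")
      case True
      obtain c where c: "c \<in> half x b C" "c \<inter> Y = P - {x}" using shP[of "P - {x}"] P by auto
      have xc: "(x \<in> c) = (x \<in> P)" using c(1) True unfolding half_def by simp
      have "c \<inter> insert x Y = P"
      proof (rule set_eqI)
        fix y show "y \<in> c \<inter> insert x Y \<longleftrightarrow> y \<in> P"
        proof (cases "y = x")
          case True then show ?thesis using xc by simp
        next
          case False
          then have "y \<in> c \<inter> insert x Y \<longleftrightarrow> y \<in> c \<inter> Y" by blast
          also have "\<dots> \<longleftrightarrow> y \<in> P - {x}" using c(2) by simp
          also have "\<dots> \<longleftrightarrow> y \<in> P" using False by simp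
          finally show ?thesis .
        qed
      qed
      moreover have "c \<in> C" using c(1) half_sub[of x b C] by blast
      ultimately show ?thesis by blast
    next
      case False': False
      have "T \<union> (P - {x}) \<in> cube T Y" using P unfolding mem_cube by auto
      moreover have "(T \<union> (P - {x})) \<inter> insert x Y = P"
      proof (rule set_eqI)
        fix y show "y \<in> (T \<union> (P - {x})) \<inter> insert x Y \<longleftrightarrow> y \<in> P"
        proof (cases "y = x")
          case True then show ?thesis using False False' by auto
        next
          case yx: False
          have "y \<in> Y \<Longrightarrow> y \<notin> T" using T(2) by blast
          then show ?thesis using yx P by auto
        qed
      qed
      ultimately show ?thesis using T(3) by blast
    qed
    note shX = this
    obtain T' where T': "insert x Y \<subseteq> X" "T' \<subseteq> X - insert x Y" "cube T' (insert x Y) \<subseteq> C"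
      using ampleD[OF am, OF shX] by blast
    define T'' where "T'' = (if b then insert x T' else T')"
    have "T'' \<subseteq> X - Y" using T' xY unfolding T''_def by auto
    moreover have "cube T'' Y \<subseteq> half x b C"
    proof
      fix c assume "c \<in> cube T'' Y"
      then have c1: "T'' \<subseteq> c" "c \<subseteq> T'' \<union> Y" unfolding mem_cube by auto
      have xT': "x \<notin> T'" using T'(2) by blast
      have "T' \<subseteq> T''" "T'' \<subseteq> insert x T'" unfolding T''_def by auto
      then have "c \<in> cube T' (insert x Y)" using c1 unfolding mem_cube by blast
      moreover have "(x \<in> c) = b"
      proof (cases b)
        case True then show ?thesis using c1 unfolding T''_def by auto
      next
        case False then show ?thesis using c1 xT' xY unfolding T''_def by auto
      qed
      ultimately show "c \<in> half x b C" using T' unfolding half_def by auto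
    qed
    ultimately show ?thesis using T by blast
  qed
qed

lemma ample_carr:
  assumes am: "ample X C"
  shows "ample X (carr x b C)"
  unfolding ample_def
proof (intro allI impI)
  fix Y assume sh: "shatters (carr x b C) Y"
  then have shP: "\<And>P. P \<subseteq> Y \<Longrightarrow> \<exists>c\<in>carr x b C. c \<inter> Y = P" unfolding shatters_iff by blast
  have xY: "x \<notin> Y"
  proof
    assume "x \<in> Y"
    have "(if b then {} else Y) \<subseteq> Y" by simp
    then obtain c where "c \<in> carr x b C" "c \<inter> Y = (if b then {} else Y)" using shP by blast
    then show False using \<open>x \<in> Y\<close> unfolding carr_def by (cases b) auto
  qed
  have "\<exists>c\<in>C. c \<inter> insert x Y = P" if P: "P \<subseteq> insert x Y" for P
  proof -
    have "P - {x} \<subseteq> Y" using P by blast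
    then obtain c where c: "c \<in> carr x b C" "c \<inter> Y = P - {x}" using shP by blast
    have cC: "c \<in> C" "flip x c \<in> C" "(x \<in> c) = b" using c(1) unfolding carr_def by auto
    show ?thesis
    proof (cases "(x \<in> P) = b")
      case True
      then have "c \<inter> insert x Y = P" using int_insert[OF _ c(2) P] cC(3) by simp
      then show ?thesis using cC by blast
    next
      case False
      have "(x \<in> flip x c) = (x \<in> P)" using False cC(3) by simp
      moreover have "flip x c \<inter> Y = P - {x}" using c(2) flip_int[OF xY] by simp
      ultimately have "flip x c \<inter> insert x Y = P" using int_insert P by blast
      then show ?thesis using cC by blast
    qed
  qed
  note shX = this
  obtain T' where T': "insert x Y \<subseteq> X" "T' \<subseteq> X - insert x Y" "cube T' (insert x Y) \<subseteq> C"
    using ampleD[OF am, OF shX] by blast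
  define T'' where "T'' = (if b then insert x T' else T')"
  have "T'' \<subseteq> X - Y" using T' xY unfolding T''_def by auto
  moreover have "cube T'' Y \<subseteq> carr x b C"
  proof
    fix c assume "c \<in> cube T'' Y"
    then have c1: "T'' \<subseteq> c" "c \<subseteq> T'' \<union> Y" unfolding mem_cube by auto
    have xT': "x \<notin> T'" using T'(2) by blast
    have "T' \<subseteq> T''" "T'' \<subseteq> insert x T'" unfolding T''_def by auto
    then have cc: "c \<in> cube T' (insert x Y)" using c1 unfolding mem_cube by blast
    have "flip x c \<in> cube T' (insert x Y)"
    proof -
      have "T' \<subseteq> flip x c" using cc xT' unfolding mem_cube flip_def by auto
      moreover have "flip x c \<subseteq> T' \<union> insert x Y" using cc unfolding mem_cube flip_def by auto
      ultimately show ?thesis unfolding mem_cube by blast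
    qed
    moreover have "(x \<in> c) = b"
    proof (cases b)
      case True then show ?thesis using c1 unfolding T''_def by auto
    next
      case False then show ?thesis using c1 xT' xY unfolding T''_def by auto
    qed
    ultimately show "c \<in> carr x b C" using T' cc unfolding carr_def by auto
  qed
  ultimately show "\<exists>T. Y \<subseteq> X \<and> T \<subseteq> X - Y \<and> cube T Y \<subseteq> carr x b C" using T' by blast
qed

lemma ample_single:
  assumes "v \<subseteq> X" shows "ample X {v}"
  unfolding ample_def
proof (intro allI impI)
  fix Y assume "shatters {v} Y"
  then have "Pow Y = {v \<inter> Y}" unfolding shatters_def by auto
  then have "Y = {}" by (metis Pow_top Pow_bottom singletonD)
  moreover have "cube v {} = {v}" by (auto simp: mem_cube)
  ultimately show "\<exists>T. Y \<subseteq> X \<and> T \<subseteq> X - Y \<and> cube T Y \<subseteq> {v}" using assms by auto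
qed

lemma carr_ne:
  assumes am: "ample X C" and c0: "c0 \<in> C" "x \<notin> c0" and c1: "c1 \<in> C" "x \<in> c1"
  shows "carr x b C \<noteq> {}"
proof -
  have "\<exists>c\<in>C. c \<inter> {x} = P" if "P \<subseteq> {x}" for P
  proof (cases "P = {}")
    case True then show ?thesis using c0 by auto
  next
    case False then have "P = {x}" using that by auto
    then show ?thesis using c1 by auto
  qed
  note shX = this
  obtain T where T: "{x} \<subseteq> X" "T \<subseteq> X - {x}" "cube T {x} \<subseteq> C" using ampleD[OF am, OF shX] by blast
  have "T \<in> cube T {x}" "insert x T \<in> cube T {x}" by (auto simp: mem_cube)
  then have "T \<in> C" "insert x T \<in> C" using T(3) by auto
  then have "(if b then insert x T else T) \<in> carr x b C" using T unfolding carr_def flip_def by auto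
  then show ?thesis by blast
qed




lemma half_face_side: "F \<in> cube_complex X (half x b C) \<Longrightarrow> F \<subseteq> side x b"
  using face_sub[of F X "half x b C"] half_side[of x b C] by (rule subset_trans)

lemma carr_face_side: "F \<in> cube_complex X (carr x b C) \<Longrightarrow> F \<subseteq> side x b"
  using face_sub[of F X "carr x b C"] carr_side[of x b C] by (rule subset_trans)

lemma side_clash:
  assumes "F \<noteq> {}" "F \<subseteq> side x b" "F \<subseteq> G" "G \<subseteq> side x b'"
  shows "b' = b"
proof -
  obtain d where d: "d \<in> F" using assms(1) by blast
  then have "d \<in> side x b" "d \<in> side x b'" using assms(2,3,4) by blast+
  then have "(x \<in> d) = b" "(x \<in> d) = b'" unfolding side_def by simp_all
  then show ?thesis by simp
qed

lemma cr_face_not_side: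
  assumes "F' \<in> cube_complex X (carr x b D)" "G = cr x F'" "G \<subseteq> side x b'"
  shows False
  using cr_not_side[OF face_ne[OF assms(1)] carr_face_side[OF assms(1)]] assms(2,3) by blast

lemma carr_mono: "S \<subseteq> C \<Longrightarrow> carr x b S \<subseteq> carr x b C"
  unfolding carr_def by auto

lemma half_mono: "S \<subseteq> C \<Longrightarrow> half x b S \<subseteq> half x b C"
  unfolding half_def by auto

lemma half_card:
  assumes "finite C" "c \<in> C" "(x \<in> c) = (\<not> b)"
  shows "card (half x b C) < card C"
proof -
  have "c \<notin> half x b C" using assms(3) unfolding half_def by auto
  then have "half x b C \<subset> C" using assms(2) half_sub[of x b C] by blast
  then show ?thesis using psubset_card_mono[OF assms(1)] by blast
qed

lemma decomp2:
  assumes "x \<in> X"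
  shows "cube_complex X C = cube_complex X (half x b C) \<union> cube_complex X (half x (\<not> b) C)
           \<union> cr x ` cube_complex X (carr x (\<not> b) C)"
proof (cases b)
  case True
  then show ?thesis using decomp[OF assms, of C "\<not> b"] by auto
next
  case False
  then show ?thesis using decomp[OF assms, of C "\<not> b"] by auto
qed

lemma cr_sub_S: "F \<in> cube_complex X (carr x b S) \<Longrightarrow> cr x F \<subseteq> S"
  using cr_sub_carr[OF face_sub] .

lemma RS_n:
  assumes finX: "finite X"
  shows "\<forall>C S. card C = n \<longrightarrow> C \<subseteq> Pow X \<longrightarrow> ample X C \<longrightarrow> ample X S \<longrightarrow> S \<subseteq> C \<longrightarrow> S \<noteq> {}
    \<longrightarrow> elementary_collapse\<^sup>*\<^sup>* (cube_complex X C) (cube_complex X S)"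
proof (induction n rule: less_induct)
  case (less n)
  show ?case
  proof (intro allI impI)
  fix C S assume cC: "card C = n" and CX: "C \<subseteq> Pow X" and amC: "ample X C" and amS: "ample X S"
    and SC: "S \<subseteq> C" and Sne: "S \<noteq> {}"
  have IH: "elementary_collapse\<^sup>*\<^sup>* (cube_complex X C') (cube_complex X S')"
    if "card C' < card C" "C' \<subseteq> Pow X" "ample X C'" "ample X S'" "S' \<subseteq> C'" "S' \<noteq> {}" for C' S'
    using less.IH that cC by blast
  have finC: "finite C" using finite_subset[OF CX] finX by simp
  show "elementary_collapse\<^sup>*\<^sup>* (cube_complex X C) (cube_complex X S)"
  proof (cases "S = C")
    case True then show ?thesis by simp
  next
    case False
    obtain s where s: "s \<in> S" using Sne by blast
    obtain e where e: "e \<in> C" "e \<notin> S" using False SC by blast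
    have "s \<noteq> e" using s e by blast
    have "\<exists>x. (x \<in> e) \<noteq> (x \<in> s)"
    proof (rule ccontr)
      assume "\<not> (\<exists>x. (x \<in> e) \<noteq> (x \<in> s))"
      then have "e = s" by blast
      then show False using \<open>s \<noteq> e\<close> by simp
    qed
    then obtain x where x: "(x \<in> e) \<noteq> (x \<in> s)" by blast
    have "e \<subseteq> X" "s \<subseteq> X" using e(1) s SC CX by blast+
    then have xX: "x \<in> X" using x by blast
    have sC: "s \<in> C" using s SC by blast
    obtain c0 c1 where c0: "c0 \<in> C" "x \<notin> c0" and c1: "c1 \<in> C" "x \<in> c1"
    proof (cases "x \<in> e")
      case True then show ?thesis using that[of s e] x e(1) sC by simp
    next
      case False then show ?thesis using that[of e s] x e(1) sC by simp
    qed
    have cardh: "card (half x b C) < card C" for b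
    proof (cases b)
      case True then show ?thesis using half_card[OF finC c0(1)] c0(2) by simp
    next
      case False then show ?thesis using half_card[OF finC c1(1)] c1(2) by simp
    qed
    have hX: "half x b C \<subseteq> Pow X" for b using half_sub[of x b C] CX by (rule subset_trans)
    let ?QC = "cube_complex X"
    show ?thesis
    proof (cases "half x True S \<noteq> {} \<and> half x False S \<noteq> {}")
      case True
      let ?NC = "carr x False C" and ?NS = "carr x False S"
      obtain s0 where s0: "s0 \<in> S" "x \<notin> s0" using True unfolding half_def by auto
      obtain s1 where s1: "s1 \<in> S" "x \<in> s1" using True unfolding half_def by auto
      have NSne: "?NS \<noteq> {}" using carr_ne[OF amS s0 s1] .
      have NSC: "?NS \<subseteq> ?NC" using carr_mono[OF SC] .
      have "card ?NC \<le> card (half x False C)"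
        using card_mono[OF finite_subset[OF half_sub finC] carr_half] .
      then have cardN: "card ?NC < card C" using cardh[of False] by linarith
      have NCX: "?NC \<subseteq> Pow X" using carr_sub[of x False C] CX by (rule subset_trans)
      have IH1: "elementary_collapse\<^sup>*\<^sup>* (?QC ?NC) (?QC ?NS)"
        using IH[OF cardN NCX ample_carr[OF amC] ample_carr[OF amS] NSC NSne] .
      have monoA: "\<forall>F\<in>?QC ?NC. \<forall>G\<in>?QC ?NC. (cr x F \<subseteq> cr x G) = (F \<subseteq> G)"
      proof (intro ballI)
        fix F G assume F: "F \<in> ?QC ?NC" and G: "G \<in> ?QC ?NC"
        show "(cr x F \<subseteq> cr x G) = (F \<subseteq> G)"
          by (rule cr_mono_iff[OF carr_face_side[OF F] carr_face_side[OF G]])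
      qed
      have step1: "elementary_collapse\<^sup>*\<^sup>* (cr x ` ?QC ?NC) (cr x ` ?QC ?NS)"
        using map_aux[OF IH1 subset_refl monoA] .
      let ?M = "?QC (half x False C) \<union> ?QC (half x True C)"
      have crM: "\<not> cr x F \<subseteq> G" if F: "F \<in> ?QC ?NC" and G: "G \<in> ?M" for F G
      proof
        assume sub: "cr x F \<subseteq> G"
        have "\<exists>b. G \<subseteq> side x b"
        proof (cases "G \<in> ?QC (half x False C)")
          case True then show ?thesis using half_face_side[OF True] by blast
        next
          case False then have G2: "G \<in> ?QC (half x True C)" using G by blast
          show ?thesis using half_face_side[OF G2] by blast
        qed
        then obtain b where "G \<subseteq> side x b" by blast
        then have "cr x F \<subseteq> side x b" using sub by (rule order_trans[rotated])
        then show False by (rule cr_face_not_side[OF F refl])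
      qed
      have step1': "elementary_collapse\<^sup>*\<^sup>* (cr x ` ?QC ?NC \<union> ?M) (cr x ` ?QC ?NS \<union> ?M)"
      proof (rule lift[OF step1])
        show "\<forall>F\<in>cr x ` ?QC ?NC - cr x ` ?QC ?NS. \<forall>G\<in>?M. \<not> F \<subset> G"
        proof (intro ballI notI)
          fix F G assume F: "F \<in> cr x ` ?QC ?NC - cr x ` ?QC ?NS" and G: "G \<in> ?M" and FG: "F \<subset> G"
          obtain F' where F'': "F' \<in> ?QC ?NC" "F = cr x F'" using F by blast
          have "\<not> cr x F' \<subseteq> G" by (rule crM[OF F''(1) G])
          then show False using F''(2) FG by blast
        qed
        show "?M \<inter> cr x ` ?QC ?NC = {}"
        proof (rule equals0I)
          fix G assume G: "G \<in> ?M \<inter> cr x ` ?QC ?NC"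
          then obtain F' where F'': "F' \<in> ?QC ?NC" "G = cr x F'" by blast
          have GM: "G \<in> ?M" using G by blast
          have "\<not> cr x F' \<subseteq> G" by (rule crM[OF F''(1) GM])
          then show False using F''(2) by blast
        qed
      qed
      have e1: "?QC C = cr x ` ?QC ?NC \<union> ?M" using decomp[OF xX, of C False] by blast
      have hTS: "half x True S \<subseteq> half x True C" "half x True S \<noteq> {}"
        using half_mono[OF SC] True by auto
      have IH2: "elementary_collapse\<^sup>*\<^sup>* (?QC (half x True C)) (?QC (half x True S))"
        using IH[OF cardh hX ample_half[OF amC] ample_half[OF amS] hTS] .
      let ?M2 = "?QC (half x False C) \<union> cr x ` ?QC ?NS"
      have step2: "elementary_collapse\<^sup>*\<^sup>* (?QC (half x True C) \<union> ?M2) (?QC (half x True S) \<union> ?M2)"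
      proof (rule lift[OF IH2])
        show "\<forall>F\<in>?QC (half x True C) - ?QC (half x True S). \<forall>G\<in>?M2. \<not> F \<subset> G"
        proof (intro ballI notI)
          fix F G assume F: "F \<in> ?QC (half x True C) - ?QC (half x True S)" and G: "G \<in> ?M2" and FG: "F \<subset> G"
          have FQ: "F \<in> ?QC (half x True C)" using F by blast
          have Fs: "F \<noteq> {}" "F \<subseteq> side x True" using face_ne[OF FQ] half_face_side[OF FQ] by auto
          show False
          proof (cases "G \<in> ?QC (half x False C)")
            case True
            have "False = True" using side_clash[OF Fs psubset_imp_subset[OF FG] half_face_side[OF True]] .
            then show False by simp
          next
            case False
            then obtain F' where F': "F' \<in> ?QC ?NS" "G = cr x F'" using G by blast
            then have "F \<subseteq> S" using cr_sub_S[OF F'(1)] FG by blast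
            then have "F \<subseteq> half x True S" using Fs unfolding half_def side_def by blast
            then show False using F cc_restrict[OF FQ] by blast
          qed
        qed
        show "?M2 \<inter> ?QC (half x True C) = {}"
        proof (rule equals0I)
          fix G assume G: "G \<in> ?M2 \<inter> ?QC (half x True C)"
          then have GQ: "G \<in> ?QC (half x True C)" by blast
          have Gs: "G \<noteq> {}" "G \<subseteq> side x True" using face_ne[OF GQ] half_face_side[OF GQ] by auto
          show False
          proof (cases "G \<in> ?QC (half x False C)")
            case True
            have "False = True" using side_clash[OF Gs subset_refl half_face_side[OF True]] .
            then show False by simp
          next
            case False
            then obtain F' where F'': "F' \<in> ?QC ?NS" "G = cr x F'" using G by blast
            show False by (rule cr_face_not_side[OF F''(1) F''(2) Gs(2)])
          qed
        qed
      qed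
      have e2: "cr x ` ?QC ?NS \<union> ?M = ?QC (half x True C) \<union> ?M2" by blast
      have hFS: "half x False S \<subseteq> half x False C" "half x False S \<noteq> {}"
        using half_mono[OF SC] True by auto
      have IH3: "elementary_collapse\<^sup>*\<^sup>* (?QC (half x False C)) (?QC (half x False S))"
        using IH[OF cardh hX ample_half[OF amC] ample_half[OF amS] hFS] .
      let ?M3 = "?QC (half x True S) \<union> cr x ` ?QC ?NS"
      have step3: "elementary_collapse\<^sup>*\<^sup>* (?QC (half x False C) \<union> ?M3) (?QC (half x False S) \<union> ?M3)"
      proof (rule lift[OF IH3])
        show "\<forall>F\<in>?QC (half x False C) - ?QC (half x False S). \<forall>G\<in>?M3. \<not> F \<subset> G"
        proof (intro ballI notI)
          fix F G assume F: "F \<in> ?QC (half x False C) - ?QC (half x False S)" and G: "G \<in> ?M3" and FG: "F \<subset> G"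
          have FQ: "F \<in> ?QC (half x False C)" using F by blast
          have Fs: "F \<noteq> {}" "F \<subseteq> side x False" using face_ne[OF FQ] half_face_side[OF FQ] by auto
          show False
          proof (cases "G \<in> ?QC (half x True S)")
            case True
            have "True = False" using side_clash[OF Fs psubset_imp_subset[OF FG] half_face_side[OF True]] .
            then show False by simp
          next
            case False
            then obtain F' where F': "F' \<in> ?QC ?NS" "G = cr x F'" using G by blast
            then have "F \<subseteq> S" using cr_sub_S[OF F'(1)] FG by blast
            then have "F \<subseteq> half x False S" using Fs unfolding half_def side_def by blast
            then show False using F cc_restrict[OF FQ] by blast
          qed
        qed
        show "?M3 \<inter> ?QC (half x False C) = {}"
        proof (rule equals0I)
          fix G assume G: "G \<in> ?M3 \<inter> ?QC (half x False C)"
          then have GQ: "G \<in> ?QC (half x False C)" by blast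
          have Gs: "G \<noteq> {}" "G \<subseteq> side x False" using face_ne[OF GQ] half_face_side[OF GQ] by auto
          show False
          proof (cases "G \<in> ?QC (half x True S)")
            case True
            have "True = False" using side_clash[OF Gs subset_refl half_face_side[OF True]] .
            then show False by simp
          next
            case False
            then obtain F' where F'': "F' \<in> ?QC ?NS" "G = cr x F'" using G by blast
            show False by (rule cr_face_not_side[OF F''(1) F''(2) Gs(2)])
          qed
        qed
      qed
      have e3: "?QC (half x True S) \<union> ?M2 = ?QC (half x False C) \<union> ?M3" by blast
      have e4: "?QC (half x False S) \<union> ?M3 = ?QC S" using decomp[OF xX, of S False] by blast
      have r1: "elementary_collapse\<^sup>*\<^sup>* (?QC C) (?QC (half x True C) \<union> ?M2)"
        using step1' unfolding e1[symmetric] e2 .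
      have r2: "elementary_collapse\<^sup>*\<^sup>* (?QC (half x True C) \<union> ?M2) (?QC (half x False C) \<union> ?M3)"
        using step2 unfolding e3 .
      have r3: "elementary_collapse\<^sup>*\<^sup>* (?QC (half x False C) \<union> ?M3) (?QC S)"
        using step3 unfolding e4 .
      show ?thesis using rtranclp_trans[OF rtranclp_trans[OF r1 r2] r3] .
    next
      case False
      obtain b where hb: "half x (\<not> b) S = {}"
      proof -
        from False have "half x True S = {} \<or> half x False S = {}" by blast
        then show ?thesis
        proof
          assume "half x True S = {}" then show ?thesis using that[of False] by simp
        next
          assume "half x False S = {}" then show ?thesis using that[of True] by simp
        qed
      qed
      have SbC: "S \<subseteq> half x b C"
      proof
        fix c assume c: "c \<in> S"
        then have "c \<notin> half x (\<not> b) S" using hb by blast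
        then have "(x \<in> c) = b" using c unfolding half_def by auto
        then show "c \<in> half x b C" using c SC unfolding half_def by blast
      qed
      let ?NC = "carr x (\<not> b) C"
      have NCne: "?NC \<noteq> {}" using carr_ne[OF amC c0 c1] .
      have IH1: "elementary_collapse\<^sup>*\<^sup>* (?QC (half x (\<not> b) C)) (?QC ?NC)"
        using IH[OF cardh hX ample_half[OF amC] ample_carr[OF amC] carr_half NCne] .
      let ?M = "?QC (half x b C) \<union> cr x ` ?QC ?NC"
      have step1: "elementary_collapse\<^sup>*\<^sup>* (?QC (half x (\<not> b) C) \<union> ?M) (?QC ?NC \<union> ?M)"
      proof (rule lift[OF IH1])
        show "\<forall>F\<in>?QC (half x (\<not> b) C) - ?QC ?NC. \<forall>G\<in>?M. \<not> F \<subset> G"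
        proof (intro ballI notI)
          fix F G assume F: "F \<in> ?QC (half x (\<not> b) C) - ?QC ?NC" and G: "G \<in> ?M" and FG: "F \<subset> G"
          have FQ: "F \<in> ?QC (half x (\<not> b) C)" using F by blast
          have Fs: "F \<noteq> {}" "F \<subseteq> side x (\<not> b)" using face_ne[OF FQ] half_face_side[OF FQ] by auto
          show False
          proof (cases "G \<in> ?QC (half x b C)")
            case True
            have "b = (\<not> b)" using side_clash[OF Fs psubset_imp_subset[OF FG] half_face_side[OF True]] .
            then show False by simp
          next
            case False
            then obtain F' where F': "F' \<in> ?QC ?NC" "G = cr x F'" using G by blast
            then have "F \<subseteq> cr x F' \<inter> side x (\<not> b)" using FG Fs by blast
            then have "F \<subseteq> F'" using cr_side[OF carr_face_side[OF F'(1)]] by simp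
            then have "F \<subseteq> ?NC" using face_sub[OF F'(1)] by blast
            then show False using F cc_restrict[OF FQ] by blast
          qed
        qed
        show "?M \<inter> ?QC (half x (\<not> b) C) = {}"
        proof (rule equals0I)
          fix G assume G: "G \<in> ?M \<inter> ?QC (half x (\<not> b) C)"
          then have GQ: "G \<in> ?QC (half x (\<not> b) C)" by blast
          have Gs: "G \<noteq> {}" "G \<subseteq> side x (\<not> b)" using face_ne[OF GQ] half_face_side[OF GQ] by auto
          show False
          proof (cases "G \<in> ?QC (half x b C)")
            case True
            have "b = (\<not> b)" using side_clash[OF Gs subset_refl half_face_side[OF True]] .
            then show False by simp
          next
            case False
            then obtain F' where F'': "F' \<in> ?QC ?NC" "G = cr x F'" using G by blast
            show False by (rule cr_face_not_side[OF F''(1) F''(2) Gs(2)])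
          qed
        qed
      qed
      have e1: "?QC C = ?QC (half x (\<not> b) C) \<union> ?M" using decomp2[OF xX, of C b] by blast
      let ?L = "?QC ?NC" and ?K0 = "?QC (half x b C)"
      have Lside: "F \<noteq> {}" "F \<subseteq> side x (\<not> b)" if "F \<in> ?L" for F
        using face_ne[OF that] carr_face_side[OF that] by auto
      have K0side: "F \<noteq> {}" "F \<subseteq> side x b" if "F \<in> ?K0" for F
        using face_ne[OF that] half_face_side[OF that] by auto
      have step2: "elementary_collapse\<^sup>*\<^sup>* (?K0 \<union> ?L \<union> cr x ` ?L) ?K0"
      proof (rule matching_collapse)
        show "finite ?L" using cc_finite[OF finX] .
        show "inj_on (cr x) ?L"
        proof (rule inj_onI)
          fix F G assume F: "F \<in> ?L" and G: "G \<in> ?L" and eq: "cr x F = cr x G"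
          have "F \<subseteq> G" using cr_mono_iff[OF Lside(2)[OF F] Lside(2)[OF G]] eq by simp
          moreover have "G \<subseteq> F" using cr_mono_iff[OF Lside(2)[OF G] Lside(2)[OF F]] eq by simp
          ultimately show "F = G" by (rule subset_antisym)
        qed
        show "\<forall>F\<in>?L. F \<subset> cr x F"
        proof
          fix F assume F: "F \<in> ?L"
          show "F \<subset> cr x F" by (rule cr_psup[OF Lside(1)[OF F] Lside(2)[OF F]])
        qed
        show "?L \<inter> cr x ` ?L = {}"
        proof (rule equals0I)
          fix G assume G: "G \<in> ?L \<inter> cr x ` ?L"
          then obtain F' where F'': "F' \<in> ?L" "G = cr x F'" by blast
          have GL: "G \<in> ?L" using G by blast
          show False by (rule cr_face_not_side[OF F''(1) F''(2) Lside(2)[OF GL]])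
        qed
        show "?K0 \<inter> ?L = {}"
        proof (rule equals0I)
          fix G assume G: "G \<in> ?K0 \<inter> ?L"
          then have "b = (\<not> b)" using side_clash[OF K0side(1,2) subset_refl Lside(2)] by blast
          then show False by simp
        qed
        show "?K0 \<inter> cr x ` ?L = {}"
        proof (rule equals0I)
          fix G assume G: "G \<in> ?K0 \<inter> cr x ` ?L"
          then obtain F' where F'': "F' \<in> ?L" "G = cr x F'" by blast
          have GK: "G \<in> ?K0" using G by blast
          show False by (rule cr_face_not_side[OF F''(1) F''(2) K0side(2)[OF GK]])
        qed
        show "\<forall>F\<in>?L. \<forall>G\<in>?K0 \<union> ?L \<union> cr x ` ?L. F \<subset> G \<longrightarrow>
          G = cr x F \<or> (G \<in> ?L \<and> card F < card G) \<or> (\<exists>F'\<in>?L. G = cr x F' \<and> card F < card F')"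
        proof (intro ballI impI)
          fix F G assume F: "F \<in> ?L" and G: "G \<in> ?K0 \<union> ?L \<union> cr x ` ?L" and FG: "F \<subset> G"
          have Fs: "F \<noteq> {}" "F \<subseteq> side x (\<not> b)" using Lside[OF F] by auto
          consider (a) "G \<in> ?K0" | (b) "G \<in> ?L" | (c) F' where "F' \<in> ?L" "G = cr x F'" using G by blast
          then show "G = cr x F \<or> (G \<in> ?L \<and> card F < card G) \<or> (\<exists>F'\<in>?L. G = cr x F' \<and> card F < card F')"
          proof cases
            case a
            have "b = (\<not> b)" using side_clash[OF Fs psubset_imp_subset[OF FG] K0side(2)[OF a]] .
            then show ?thesis by simp
          next
            case b
            then have "finite G" using face_finite[OF finX] by blast
            then have "card F < card G" using psubset_card_mono[OF _ FG] by blast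
            then show ?thesis using b by blast
          next
            case c
            then have "F \<subseteq> cr x F' \<inter> side x (\<not> b)" using FG Fs by blast
            then have FF': "F \<subseteq> F'" using cr_side[OF Lside(2)[OF c(1)]] by simp
            show ?thesis
            proof (cases "F = F'")
              case True then show ?thesis using c by blast
            next
              case False
              then have "F \<subset> F'" using FF' by blast
              moreover have "finite F'" using face_finite[OF finX c(1)] .
              ultimately have "card F < card F'" using psubset_card_mono[of F' F] by blast
              then show ?thesis using c by blast
            qed
          qed
        qed
      qed
      have e2: "?QC ?NC \<union> ?M = ?K0 \<union> ?L \<union> cr x ` ?L" by blast
      have IH3: "elementary_collapse\<^sup>*\<^sup>* ?K0 (?QC S)"
        using IH[OF cardh hX ample_half[OF amC] amS SbC Sne] .
      have r1: "elementary_collapse\<^sup>*\<^sup>* (?QC C) (?K0 \<union> ?L \<union> cr x ` ?L)"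
        using step1 unfolding e1[symmetric] e2 .
      show ?thesis using rtranclp_trans[OF rtranclp_trans[OF r1 step2] IH3] .
    qed
  qed
  qed
qed

lemma RS:
  assumes "finite X" "C \<subseteq> Pow X" "ample X C" "ample X S" "S \<subseteq> C" "S \<noteq> {}"
  shows "elementary_collapse\<^sup>*\<^sup>* (cube_complex X C) (cube_complex X S)"
  using RS_n[OF assms(1), of "card C"] assms(2-) by blast

theorem proposition4p9:
  fixes X :: "'a set" and C :: "'a set set"
  assumes "finite X" and "C \<subseteq> Pow X" and "C \<noteq> {}" and "ample X C"
  shows "collapsible (cube_complex X C)"
proof -
  obtain v where v: "v \<in> C" using assms(3) by blast
  have vX: "v \<subseteq> X" using v assms(2) by blast
  have "{v} \<subseteq> C" "{v} \<noteq> {}" using v by auto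
  then have "elementary_collapse\<^sup>*\<^sup>* (cube_complex X C) (cube_complex X {v})"
    using RS[OF assms(1) assms(2) assms(4) ample_single[OF vX]] by simp
  moreover have "cube_complex X {v} = {{v}}"
  proof
    show "cube_complex X {v} \<subseteq> {{v}}"
    proof
      fix Q assume Q: "Q \<in> cube_complex X {v}"
      have "Q \<noteq> {}" "Q \<subseteq> {v}" using face_ne[OF Q] face_sub[OF Q] by blast+
      then show "Q \<in> {{v}}" by blast
    qed
    have "{v} = iv v v" unfolding iv_def by auto
    then have "{v} \<in> cube_complex X {v}" unfolding cc_iff using vX by blast
    then show "{{v}} \<subseteq> cube_complex X {v}" by blast
  qed
  ultimately show ?thesis unfolding collapsible_def by auto
qed


end
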